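(* Let $(E,\tau)$ be a locally solid vector lattice and let $x\in E$. Let $I_x$ and $B_x$ denote the ideal and the band in $E$ generated by $x$. Then the restricted topology $\tau|_{B_x}$ is solidly submetrisable if and only if the restricted topology $\tau|_{I_x}$ is solidly submetrisable.
   Context: All vector lattices are real and Archimedean; linear topologies are Hausdorff. A locally solid topology on a vector lattice is a linear topology such that zero has a neighbourhood basis of solid sets. A locally solid topology $\sigma$ on a vector lattice $G$ is called solidly submetrisable if it is finer than some metrisable locally solid topology on $G$. (Here $I_x$ and $B_x$ are regarded as vector lattices with the restricted topologies.) *)

theory Defs
  imports "HOL-Analysis.Analysis"
begin

text \<open>All notions below are relative to a carrier set S
(a vector sublattice / ideal of the ambient vector lattice), so that the
restricted topologies on I_x and B_x can be handled.\<close>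

definition vabs :: "'a::{ordered_real_vector,lattice} \<Rightarrow> 'a" where
  "vabs x = sup x (- x)"

definition archimedean_vl :: "'a::{ordered_real_vector,lattice} itself \<Rightarrow> bool" where
  "archimedean_vl _ \<longleftrightarrow>
     (\<forall>x y :: 'a. 0 \<le> x \<and> (\<forall>n::nat. real n *\<^sub>R x \<le> y) \<longrightarrow> x = 0)"

definition is_ideal :: "'a::{ordered_real_vector,lattice} set \<Rightarrow> bool" where
  "is_ideal I \<longleftrightarrow> 0 \<in> I \<and> (\<forall>x\<in>I. \<forall>y\<in>I. x + y \<in> I) \<and> (\<forall>c. \<forall>x\<in>I. c *\<^sub>R x \<in> I)
     \<and> (\<forall>x\<in>I. \<forall>y. vabs y \<le> vabs x \<longrightarrow> y \<in> I)"

definition is_lub :: "'a::order set \<Rightarrow> 'a \<Rightarrow> bool" where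
  "is_lub D s \<longleftrightarrow> (\<forall>d\<in>D. d \<le> s) \<and> (\<forall>u. (\<forall>d\<in>D. d \<le> u) \<longrightarrow> s \<le> u)"

definition is_band :: "'a::{ordered_real_vector,lattice} set \<Rightarrow> bool" where
  "is_band B \<longleftrightarrow> is_ideal B \<and> (\<forall>D s. D \<subseteq> B \<and> is_lub D s \<longrightarrow> s \<in> B)"

definition ideal_gen :: "'a::{ordered_real_vector,lattice} \<Rightarrow> 'a set" where
  "ideal_gen x = \<Inter>{I. is_ideal I \<and> x \<in> I}"

definition band_gen :: "'a::{ordered_real_vector,lattice} \<Rightarrow> 'a set" where
  "band_gen x = \<Inter>{B. is_band B \<and> x \<in> B}"

definition solid_in :: "'a::{ordered_real_vector,lattice} set \<Rightarrow> 'a set \<Rightarrow> bool" where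
  "solid_in S A \<longleftrightarrow> A \<subseteq> S \<and> (\<forall>x\<in>A. \<forall>y\<in>S. vabs y \<le> vabs x \<longrightarrow> y \<in> A)"

definition linear_topology_on :: "'a::{ordered_real_vector,lattice} set \<Rightarrow> 'a topology \<Rightarrow> bool" where
  "linear_topology_on S T \<longleftrightarrow> topspace T = S \<and> Hausdorff_space T
     \<and> continuous_map (prod_topology T T) T (\<lambda>(a, b). a + b)
     \<and> continuous_map (prod_topology euclideanreal T) T (\<lambda>(c, a). c *\<^sub>R a)"

definition locally_solid_on :: "'a::{ordered_real_vector,lattice} set \<Rightarrow> 'a topology \<Rightarrow> bool" where
  "locally_solid_on S T \<longleftrightarrow> linear_topology_on S T \<and>
     (\<forall>U. openin T U \<and> 0 \<in> U \<longrightarrow>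
        (\<exists>V. solid_in S V \<and> V \<subseteq> U \<and> (\<exists>W. openin T W \<and> 0 \<in> W \<and> W \<subseteq> V)))"

definition solidly_submetrisable :: "'a::{ordered_real_vector,lattice} set \<Rightarrow> 'a topology \<Rightarrow> bool" where
  "solidly_submetrisable S \<sigma> \<longleftrightarrow>
     (\<exists>\<rho>. locally_solid_on S \<rho> \<and> metrizable_space \<rho> \<and> (\<forall>U. openin \<rho> U \<longrightarrow> openin \<sigma> U))"

end

theory Submission
  imports Defs "HOL-Library.Lattice_Algebras"
begin


lemma cl: "class.lattice_ab_group_add (+) (0::'a::{ordered_real_vector,lattice}) (-) uminus (\<le>) (<) inf sup"
  by unfold_locales

lemma add_eq_inf_sup': "(a::'a::{ordered_real_vector,lattice}) + b = sup a b + inf a b"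
  by (rule lattice_ab_group_add.add_eq_inf_sup[OF cl])

lemma cli: "class.semilattice_inf_ab_group_add (+) (0::'a::{ordered_real_vector,lattice}) (-) uminus (\<le>) (<) inf"
  by unfold_locales
lemma cls: "class.semilattice_sup_ab_group_add (+) (0::'a::{ordered_real_vector,lattice}) (-) uminus (\<le>) (<) sup"
  by unfold_locales

lemmas add_inf_left' = semilattice_inf_ab_group_add.add_inf_distrib_left[OF cli]
lemmas add_inf_right' = semilattice_inf_ab_group_add.add_inf_distrib_right[OF cli]
lemmas add_sup_left' = semilattice_sup_ab_group_add.add_sup_distrib_left[OF cls]
lemmas add_sup_right' = semilattice_sup_ab_group_add.add_sup_distrib_right[OF cls]
lemmas neg_inf' = lattice_ab_group_add.neg_inf_eq_sup[OF cl]
lemmas neg_sup' = lattice_ab_group_add.neg_sup_eq_inf[OF cl]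

lemma vabs_nonneg: "0 \<le> vabs (y::'a::{ordered_real_vector,lattice})"
proof -
  have "0 \<le> vabs y + vabs y"
  proof -
    have "y + (- y) \<le> vabs y + vabs y" unfolding vabs_def
      by (intro add_mono) auto
    then show ?thesis by simp
  qed
  then show ?thesis by (simp add: lattice_ab_group_add.zero_le_double_add_iff_zero_le_single_add[OF cl])
qed


lemma vabs_neg[simp]: "vabs (- (y::'a::{ordered_real_vector,lattice})) = vabs y"
  by (simp add: vabs_def sup_commute)

lemma vabs_pos: "0 \<le> (y::'a::{ordered_real_vector,lattice}) \<Longrightarrow> vabs y = y"
proof -
  assume a: "0 \<le> y"
  then have "- y \<le> 0" by simp
  then have "- y \<le> y" using a by (rule order_trans)
  then show "vabs y = y" unfolding vabs_def by (rule sup_absorb1)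
qed

lemma vabs_vabs[simp]: "vabs (vabs (y::'a::{ordered_real_vector,lattice})) = vabs y"
  by (simp add: vabs_pos vabs_nonneg)

lemma le_vabs: "(y::'a::{ordered_real_vector,lattice}) \<le> vabs y" "- y \<le> vabs y"
  by (simp_all add: vabs_def)

lemma vabs_zero[simp]: "vabs (0::'a::{ordered_real_vector,lattice}) = 0"
  by (simp add: vabs_def)

lemma vabs_zero_iff: "vabs (y::'a::{ordered_real_vector,lattice}) = 0 \<longleftrightarrow> y = 0"
proof
  assume a: "vabs y = 0"
  have "y \<le> 0" using le_vabs(1)[of y] unfolding a .
  moreover have "- y \<le> 0" using le_vabs(2)[of y] unfolding a .
  ultimately show "y = 0" by (intro antisym) simp_all
next
  assume "y = 0" then show "vabs y = 0" by (simp add: vabs_def)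
qed

lemma vabs_triangle: "vabs ((a::'a::{ordered_real_vector,lattice}) + b) \<le> vabs a + vabs b"
proof -
  have "a + b \<le> vabs a + vabs b" by (intro add_mono le_vabs)
  moreover have "- a + - b \<le> vabs a + vabs b" by (intro add_mono le_vabs)
  then have "- (a + b) \<le> vabs a + vabs b" by simp
  ultimately show ?thesis unfolding vabs_def by (rule sup_least)
qed

lemma vabs_diff_commute: "vabs ((a::'a::{ordered_real_vector,lattice}) - b) = vabs (b - a)"
  by (metis minus_diff_eq vabs_neg)

lemma inf_add_le:
  fixes a b c :: "'a::{ordered_real_vector,lattice}"
  assumes "0 \<le> a" "0 \<le> b" "0 \<le> c"
  shows "inf (a + b) c \<le> inf a c + inf b c"
proof -
  have "inf a c + inf b c = inf (inf a c + b) (inf a c + c)" by (rule add_inf_left')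
  also have "\<dots> = inf (inf (a + b) (c + b)) (inf (a + c) (c + c))"
    by (simp add: add_inf_right')
  finally have eq: "inf a c + inf b c = inf (inf (a + b) (c + b)) (inf (a + c) (c + c))" .
  have "c \<le> c + b" "c \<le> a + c" "c \<le> c + c" using assms by simp_all
  then have "inf (a + b) c \<le> c + b" "inf (a + b) c \<le> a + c" "inf (a + b) c \<le> c + c"
    by (auto intro: order_trans[OF inf_le2])
  then show ?thesis unfolding eq by simp
qed

lemma scaleR_sup:
  fixes a b :: "'a::{ordered_real_vector,lattice}"
  assumes "0 \<le> t"
  shows "t *\<^sub>R sup a b = sup (t *\<^sub>R a) (t *\<^sub>R b)"
proof (cases "t = 0")
  case True then show ?thesis by simp
next
  case False
  then have t: "0 < t" using assms by simp
  show ?thesis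
  proof (rule antisym)
    show "sup (t *\<^sub>R a) (t *\<^sub>R b) \<le> t *\<^sub>R sup a b"
      using assms by (simp add: scaleR_left_mono)
    let ?m = "sup (t *\<^sub>R a) (t *\<^sub>R b)"
    have "a \<le> inverse t *\<^sub>R ?m"
    proof -
      have e: "inverse t *\<^sub>R (t *\<^sub>R a) = a" using t by simp
      have "inverse t *\<^sub>R (t *\<^sub>R a) \<le> inverse t *\<^sub>R ?m"
        by (rule scaleR_left_mono) (simp_all add: t less_imp_le)
      then show ?thesis by (simp only: e)
    qed
    moreover have "b \<le> inverse t *\<^sub>R ?m"
    proof -
      have e: "inverse t *\<^sub>R (t *\<^sub>R b) = b" using t by simp
      have "inverse t *\<^sub>R (t *\<^sub>R b) \<le> inverse t *\<^sub>R ?m"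
        by (rule scaleR_left_mono) (simp_all add: t less_imp_le)
      then show ?thesis by (simp only: e)
    qed
    ultimately have "sup a b \<le> inverse t *\<^sub>R ?m" by simp
    then have "t *\<^sub>R sup a b \<le> t *\<^sub>R (inverse t *\<^sub>R ?m)"
      by (rule scaleR_left_mono) (simp add: t less_imp_le)
    moreover have "t *\<^sub>R (inverse t *\<^sub>R ?m) = ?m" using t by simp
    ultimately show "t *\<^sub>R sup a b \<le> ?m" by simp
  qed
qed

lemma scaleR_inf:
  fixes a b :: "'a::{ordered_real_vector,lattice}"
  assumes "0 \<le> t"
  shows "t *\<^sub>R inf a b = inf (t *\<^sub>R a) (t *\<^sub>R b)"
proof -
  have "inf a b = - sup (- a) (- b)" by (simp add: neg_sup')
  then have "t *\<^sub>R inf a b = - sup (t *\<^sub>R (- a)) (t *\<^sub>R (- b))"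
    using scaleR_sup[OF assms, of "- a" "- b"] by simp
  then show ?thesis by (simp add: neg_sup')
qed

lemma vabs_scaleR_nonneg: "0 \<le> c \<Longrightarrow> vabs (c *\<^sub>R (y::'a::{ordered_real_vector,lattice})) = c *\<^sub>R vabs y"
  unfolding vabs_def using scaleR_sup[of c y "- y"] by simp

lemma vabs_scaleR: "vabs (c *\<^sub>R (y::'a::{ordered_real_vector,lattice})) = \<bar>c\<bar> *\<^sub>R vabs y"
proof (cases "0 \<le> c")
  case True
  then show ?thesis by (simp add: vabs_scaleR_nonneg)
next
  case False
  then have "c *\<^sub>R y = \<bar>c\<bar> *\<^sub>R (- y)" by simp
  then have "vabs (c *\<^sub>R y) = \<bar>c\<bar> *\<^sub>R vabs (- y)" using vabs_scaleR_nonneg[of "\<bar>c\<bar>" "- y"] by simp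
  then show ?thesis by simp
qed


lemma inf_nonneg: "0 \<le> a \<Longrightarrow> 0 \<le> b \<Longrightarrow> 0 \<le> inf (a::'a::{ordered_real_vector,lattice}) b"
  by simp

lemma ideal_Inter: "(\<And>I. I \<in> F \<Longrightarrow> is_ideal I) \<Longrightarrow> is_ideal (\<Inter>F)"
  unfolding is_ideal_def by blast

lemma ideal_gen_ideal: "is_ideal (ideal_gen x)"
  unfolding ideal_gen_def by (rule ideal_Inter) blast

lemma ideal_gen_mem: "x \<in> ideal_gen x"
  unfolding ideal_gen_def by blast

lemma band_gen_ideal: "is_ideal (band_gen x)"
  unfolding band_gen_def by (rule ideal_Inter) (auto simp: is_band_def)

lemma band_gen_mem: "x \<in> band_gen x"
  unfolding band_gen_def by blast

lemma ideal_sub_band: "ideal_gen x \<subseteq> band_gen x"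
  unfolding ideal_gen_def band_gen_def is_band_def by blast

lemma ideal_zero: "is_ideal I \<Longrightarrow> 0 \<in> I"
  by (simp add: is_ideal_def)

lemma ideal_add: "is_ideal I \<Longrightarrow> a \<in> I \<Longrightarrow> b \<in> I \<Longrightarrow> a + b \<in> I"
  by (simp add: is_ideal_def)

lemma ideal_scaleR: "is_ideal I \<Longrightarrow> a \<in> I \<Longrightarrow> c *\<^sub>R a \<in> I"
  by (simp add: is_ideal_def)

lemma ideal_minus: "is_ideal I \<Longrightarrow> a \<in> I \<Longrightarrow> - a \<in> I"
  using ideal_scaleR[of I a "-1"] by simp

lemma ideal_diff: "is_ideal I \<Longrightarrow> a \<in> I \<Longrightarrow> b \<in> I \<Longrightarrow> a - b \<in> I"
  using ideal_add[of I a "- b"] ideal_minus[of I b] by simp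

lemma ideal_solid: "is_ideal I \<Longrightarrow> a \<in> I \<Longrightarrow> vabs y \<le> vabs a \<Longrightarrow> y \<in> I"
  unfolding is_ideal_def by blast

lemma ideal_inf_mem: "is_ideal I \<Longrightarrow> x \<in> I \<Longrightarrow> inf (vabs y) (vabs x) \<in> I"
  by (rule ideal_solid[of I x]) (simp_all add: vabs_pos vabs_nonneg)

lemma lub_inf_le:
  fixes s c :: "'a::{ordered_real_vector,lattice}"
  assumes "is_lub S s" "\<And>d. d \<in> S \<Longrightarrow> inf d c \<le> 0"
  shows "inf s c \<le> 0"
proof -
  have "d \<le> sup s c - c" if "d \<in> S" for d
  proof -
    have eq: "d + c = sup d c + inf d c" by (rule add_eq_inf_sup')
    have "d \<le> s" using assms(1) that unfolding is_lub_def by blast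
    then have "sup d c \<le> sup s c" by (rule sup_mono) (rule order.refl)
    then have "sup d c + inf d c \<le> sup s c + 0" using assms(2)[OF that] by (rule add_mono)
    then have "d + c \<le> sup s c" unfolding eq by simp
    then show ?thesis by (simp add: le_diff_eq)
  qed
  then have "s \<le> sup s c - c" using assms(1) unfolding is_lub_def by blast
  then have "s + c \<le> sup s c" by (simp add: le_diff_eq)
  moreover have "s + c = sup s c + inf s c" by (rule add_eq_inf_sup')
  ultimately have "sup s c + inf s c \<le> sup s c + 0" by simp
  then show ?thesis by (rule add_le_imp_le_left)
qed

lemma disj_scale:
  fixes a v :: "'a::{ordered_real_vector,lattice}"
  assumes "0 \<le> a" "0 \<le> v" "inf a v = 0" "0 \<le> t"
  shows "inf (t *\<^sub>R a) v = 0"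
proof (rule antisym)
  let ?T = "max t 1"
  have "inf (t *\<^sub>R a) v \<le> inf (?T *\<^sub>R a) (?T *\<^sub>R v)"
  proof (rule inf_mono)
    show "t *\<^sub>R a \<le> ?T *\<^sub>R a" using assms by (intro scaleR_right_mono) auto
    have "1 *\<^sub>R v \<le> ?T *\<^sub>R v" using assms by (intro scaleR_right_mono) auto
    then show "v \<le> ?T *\<^sub>R v" by simp
  qed
  also have "\<dots> = ?T *\<^sub>R inf a v" by (rule scaleR_inf[symmetric]) simp
  finally show "inf (t *\<^sub>R a) v \<le> 0" using assms(3) by simp
  show "0 \<le> inf (t *\<^sub>R a) v" using assms by (simp add: scaleR_nonneg_nonneg)
qed

lemma band_disjoint_zero:
  fixes x y :: "'a::{ordered_real_vector,lattice}"
  assumes "y \<in> band_gen x" "inf (vabs y) (vabs x) = 0"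
  shows "y = 0"
proof -
  define Ad where "Ad = {w. inf (vabs w) (vabs x) = 0}"
  define D where "D = {z. \<forall>w\<in>Ad. inf (vabs z) (vabs w) = 0}"
  have idD: "is_ideal D"
    unfolding is_ideal_def
  proof (intro conjI ballI allI impI)
    show "0 \<in> D" unfolding D_def by (simp add: vabs_nonneg inf_absorb1)
    fix a b assume a: "a \<in> D" and b: "b \<in> D"
    show "a + b \<in> D" unfolding D_def
    proof (intro CollectI ballI)
      fix w assume w: "w \<in> Ad"
      have "inf (vabs (a + b)) (vabs w) \<le> inf (vabs a + vabs b) (vabs w)"
        by (intro inf_mono vabs_triangle order.refl)
      also have "\<dots> \<le> inf (vabs a) (vabs w) + inf (vabs b) (vabs w)"
        by (intro inf_add_le vabs_nonneg)
      also have "\<dots> = 0" using a b w unfolding D_def by simp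
      finally show "inf (vabs (a + b)) (vabs w) = 0"
        by (intro antisym) (simp_all add: vabs_nonneg)
    qed
  next
    fix c and a assume a: "a \<in> D"
    show "c *\<^sub>R a \<in> D" unfolding D_def
    proof (intro CollectI ballI)
      fix w assume w: "w \<in> Ad"
      have "inf (vabs a) (vabs w) = 0" using a w unfolding D_def by simp
      then show "inf (vabs (c *\<^sub>R a)) (vabs w) = 0" unfolding vabs_scaleR
        by (intro disj_scale vabs_nonneg) simp_all
    qed
  next
    fix a y assume a: "a \<in> D" and le: "vabs y \<le> vabs a"
    show "y \<in> D" unfolding D_def
    proof (intro CollectI ballI)
      fix w assume w: "w \<in> Ad"
      have "inf (vabs y) (vabs w) \<le> inf (vabs a) (vabs w)" using le by (intro inf_mono) simp_all
      also have "\<dots> = 0" using a w unfolding D_def by simp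
      finally show "inf (vabs y) (vabs w) = 0"
        by (intro antisym) (simp_all add: vabs_nonneg)
    qed
  qed
  have bD: "is_band D"
    unfolding is_band_def
  proof (intro conjI idD allI impI)
    fix S s assume Ss: "S \<subseteq> D \<and> is_lub S s"
    then have SD: "S \<subseteq> D" and lub: "is_lub S s" by auto
    show "s \<in> D"
    proof (cases "S = {}")
      case True
      then have s1: "s \<le> 0" and s2: "s \<le> s + s" using lub unfolding is_lub_def by blast+
      from s2 have "0 \<le> s" by (simp only: le_add_same_cancel1)
      with s1 have "s = 0" by (rule antisym)
      then show ?thesis using ideal_zero[OF idD] by simp
    next
      case False
      then obtain d0 where d0: "d0 \<in> S" by blast
      show ?thesis unfolding D_def
      proof (intro CollectI ballI)
        fix w assume w: "w \<in> Ad"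
        let ?c = "vabs w"
        have c0: "0 \<le> ?c" by (rule vabs_nonneg)
        have "vabs s \<le> sup s 0 + sup (- s) 0"
        proof -
          have "s \<le> sup s 0 + sup (- s) 0" by (rule add_increasing2) simp_all
          moreover have "- s \<le> sup s 0 + sup (- s) 0" by (rule add_increasing) simp_all
          ultimately show ?thesis unfolding vabs_def by (rule sup_least)
        qed
        then have "inf (vabs s) ?c \<le> inf (sup s 0 + sup (- s) 0) ?c" by (intro inf_mono) simp_all
        also have "\<dots> \<le> inf (sup s 0) ?c + inf (sup (- s) 0) ?c" by (intro inf_add_le c0) simp_all
        also have "\<dots> \<le> 0 + 0"
        proof (rule add_mono)
          have "sup (- s) 0 \<le> vabs d0"
          proof (rule sup_least)
            have "d0 \<le> s" using lub d0 unfolding is_lub_def by blast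
            then have "- s \<le> - d0" by simp
            then show "- s \<le> vabs d0" using le_vabs(2)[of d0] by (rule order_trans)
          qed (rule vabs_nonneg)
          then have "inf (sup (- s) 0) ?c \<le> inf (vabs d0) ?c" by (intro inf_mono) simp_all
          also have "\<dots> = 0" using SD d0 w unfolding D_def by auto
          finally show "inf (sup (- s) 0) ?c \<le> 0" .
          show "inf (sup s 0) ?c \<le> 0"
          proof (rule lub_inf_le[of "(\<lambda>d. sup d 0) ` S"])
            show "is_lub ((\<lambda>d. sup d 0) ` S) (sup s 0)"
              unfolding is_lub_def
            proof (intro conjI ballI allI impI)
              fix e assume "e \<in> (\<lambda>d. sup d 0) ` S"
              then obtain d where "d \<in> S" "e = sup d 0" by blast
              then have "d \<le> s" using lub unfolding is_lub_def by blast
              then show "e \<le> sup s 0" using \<open>e = sup d 0\<close> by (simp add: le_supI1)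
            next
              fix u assume u: "\<forall>e\<in>(\<lambda>d. sup d 0) ` S. e \<le> u"
              then have "\<forall>d\<in>S. d \<le> u" by auto
              then have "s \<le> u" using lub unfolding is_lub_def by blast
              moreover have "0 \<le> u" using u d0 by auto
              ultimately show "sup s 0 \<le> u" by simp
            qed
          next
            fix e assume "e \<in> (\<lambda>d. sup d 0) ` S"
            then obtain d where d: "d \<in> S" "e = sup d 0" by blast
            have "sup d 0 \<le> vabs d" by (simp add: le_vabs(1) vabs_nonneg)
            then have "inf e ?c \<le> inf (vabs d) ?c" using d by (intro inf_mono) simp_all
            also have "\<dots> = 0" using SD d w unfolding D_def by auto
            finally show "inf e ?c \<le> 0" .
          qed
        qed
        finally show "inf (vabs s) ?c = 0"
          by (intro antisym) (simp_all add: vabs_nonneg)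
      qed
    qed
  qed
  have "x \<in> D" unfolding D_def Ad_def
  proof (intro CollectI ballI)
    fix w assume "w \<in> {w. inf (vabs w) (vabs x) = 0}"
    then have "inf (vabs w) (vabs x) = 0" by blast
    then show "inf (vabs x) (vabs w) = 0" by (simp only: inf.commute)
  qed
  then have "band_gen x \<subseteq> D" using bD unfolding band_gen_def by (intro Inter_lower) blast
  then have "y \<in> D" using assms(1) by (rule subsetD)
  moreover have "y \<in> Ad" using assms(2) unfolding Ad_def by blast
  ultimately have "inf (vabs y) (vabs y) = 0" unfolding D_def by blast
  then have "vabs y = 0" by (simp only: inf.idem)
  then show ?thesis by (simp only: vabs_zero_iff)
qed



locale chainV =
  fixes BB :: "'a::real_vector set" and V :: "nat \<Rightarrow> 'a set"
  assumes V0: "V 0 = BB"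
    and V_zero: "0 \<in> V k"
    and V_neg: "y \<in> V k \<Longrightarrow> - y \<in> V k"
    and V_dec: "V (Suc k) \<subseteq> V k"
    and V_triple: "a \<in> V (Suc k) \<Longrightarrow> b \<in> V (Suc k) \<Longrightarrow> c \<in> V (Suc k) \<Longrightarrow> a + b + c \<in> V k"
    and V_bal: "y \<in> V k \<Longrightarrow> \<bar>t\<bar> \<le> 1 \<Longrightarrow> t *\<^sub>R y \<in> V k"
    and V_int: "(\<And>k. y \<in> V k) \<Longrightarrow> y = 0"
    and B_add: "a \<in> BB \<Longrightarrow> b \<in> BB \<Longrightarrow> a + b \<in> BB"
    and B_scale: "a \<in> BB \<Longrightarrow> t *\<^sub>R a \<in> BB"
begin

lemma V_mono: "j \<le> k \<Longrightarrow> V k \<subseteq> V j"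
proof (induction k)
  case 0 then show ?case by simp
next
  case (Suc k)
  show ?case
  proof (cases "j = Suc k")
    case False
    then have "j \<le> k" using Suc.prems by simp
    then show ?thesis using Suc.IH V_dec by blast
  qed simp
qed

lemma V_sub: "V k \<subseteq> BB"
  using V_mono[of 0 k] V0 by simp

lemma B_zero: "0 \<in> BB"
  using V_zero[of 0] V0 by simp

lemma B_neg: "a \<in> BB \<Longrightarrow> - a \<in> BB"
  using V_neg[of a 0] V0 by simp

lemma B_diff: "a \<in> BB \<Longrightarrow> b \<in> BB \<Longrightarrow> a - b \<in> BB"
  using B_add[of a "- b"] B_neg[of b] by simp

lemma B_sum_list: "set ys \<subseteq> BB \<Longrightarrow> sum_list ys \<in> BB"
  by (induction ys) (auto intro: B_add B_zero)

definition gV :: "'a \<Rightarrow> real" where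
  "gV y = (if \<forall>k. y \<in> V k then 0 else (1/2) ^ (GREATEST k. y \<in> V k))"

lemma G_char:
  assumes "y \<in> BB"
  shows "(\<forall>k. y \<in> V k) \<and> gV y = 0 \<or> (\<exists>K. y \<in> V K \<and> gV y = (1/2) ^ K)"
proof (cases "\<forall>k. y \<in> V k")
  case True then show ?thesis by (simp add: gV_def)
next
  case False
  then obtain K0 where K0: "y \<notin> V K0" by blast
  have bound: "k < K0" if "y \<in> V k" for k
  proof (rule ccontr)
    assume "\<not> k < K0"
    then have "V k \<subseteq> V K0" by (intro V_mono) simp
    then show False using that K0 by blast
  qed
  have "y \<in> V 0" using assms V0 by simp
  then have "y \<in> V (GREATEST k. y \<in> V k)"
    by (rule GreatestI_nat[where b = K0]) (auto dest: bound intro: less_imp_le)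
  then show ?thesis using False by (auto simp: gV_def)
qed

lemma G_nonneg: "0 \<le> gV y"
  by (simp add: gV_def)

lemma G_le: "y \<in> V k \<Longrightarrow> gV y \<le> (1/2) ^ k"
proof -
  assume yk: "y \<in> V k"
  show ?thesis
  proof (cases "\<forall>k. y \<in> V k")
    case True then show ?thesis by (simp add: gV_def)
  next
    case False
    then obtain K0 where K0: "y \<notin> V K0" by blast
    have bound: "k < K0" if "y \<in> V k" for k
    proof (rule ccontr)
      assume "\<not> k < K0"
      then have "V k \<subseteq> V K0" by (intro V_mono) simp
      then show False using that K0 by blast
    qed
    have "k \<le> (GREATEST k. y \<in> V k)"
      using yk by (rule Greatest_le_nat[where b = K0]) (auto dest: bound intro: less_imp_le)
    then have "(1/2::real) ^ (GREATEST k. y \<in> V k) \<le> (1/2) ^ k"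
      by (rule power_decreasing) auto
    then show ?thesis using False by (simp add: gV_def)
  qed
qed

lemma G_le1: "y \<in> BB \<Longrightarrow> gV y \<le> 1"
  using G_le[of y 0] V0 by simp

lemma G_mem:
  assumes "y \<in> BB" "gV y < (1/2) ^ k"
  shows "y \<in> V (Suc k)"
  using G_char[OF assms(1)]
proof
  assume "(\<forall>k. y \<in> V k) \<and> gV y = 0" then show ?thesis by blast
next
  assume "\<exists>K. y \<in> V K \<and> gV y = (1/2) ^ K"
  then obtain K where K: "y \<in> V K" "gV y = (1/2) ^ K" by blast
  have "k < K"
  proof (rule ccontr)
    assume "\<not> k < K"
    then have "(1/2::real) ^ k \<le> (1/2) ^ K" by (intro power_decreasing) auto
    then show False using assms(2) K(2) by simp
  qed
  then have "V K \<subseteq> V (Suc k)" by (intro V_mono) simp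
  then show ?thesis using K(1) by blast
qed

lemma G_all: "y \<in> BB \<Longrightarrow> gV y \<le> 0 \<Longrightarrow> y \<in> V k"
proof (cases k)
  case 0
  then show "y \<in> BB \<Longrightarrow> gV y \<le> 0 \<Longrightarrow> y \<in> V k" using V0 by simp
next
  case (Suc k')
  assume "y \<in> BB" "gV y \<le> 0"
  moreover have "(0::real) < (1/2) ^ k'" by simp
  ultimately have "gV y < (1/2) ^ k'" by linarith
  then have "y \<in> V (Suc k')" using G_mem \<open>y \<in> BB\<close> by blast
  then show "y \<in> V k" using Suc by simp
qed

lemma G_zero_iff: "y \<in> BB \<Longrightarrow> gV y \<le> 0 \<Longrightarrow> y = 0"
  using G_all V_int by blast

lemma G_neg: "gV (- y) = gV y"
proof -
  have "(y \<in> V k) = (- y \<in> V k)" for k using V_neg[of y k] V_neg[of "- y" k] by auto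
  then show ?thesis by (simp add: gV_def)
qed

lemma G_bal:
  assumes "y \<in> BB" "\<bar>t\<bar> \<le> 1"
  shows "gV (t *\<^sub>R y) \<le> gV y"
  using G_char[OF assms(1)]
proof
  assume "(\<forall>k. y \<in> V k) \<and> gV y = 0"
  then have "\<forall>k. t *\<^sub>R y \<in> V k" using V_bal assms(2) by blast
  then show ?thesis using \<open>(\<forall>k. y \<in> V k) \<and> gV y = 0\<close> by (simp add: gV_def)
next
  assume "\<exists>K. y \<in> V K \<and> gV y = (1/2) ^ K"
  then obtain K where K: "y \<in> V K" "gV y = (1/2) ^ K" by blast
  then have "t *\<^sub>R y \<in> V K" using V_bal assms(2) by blast
  then show ?thesis using G_le K(2) by simp
qed

definition pV :: "'a \<Rightarrow> real" where
  "pV y = Inf {sum_list (map gV ys) | ys. set ys \<subseteq> BB \<and> sum_list ys = y}"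

lemma sum_G_nonneg: "0 \<le> sum_list (map gV ys)"
  by (induction ys) (auto intro: add_nonneg_nonneg G_nonneg)

lemma P_bdd: "bdd_below {sum_list (map gV ys) | ys. set ys \<subseteq> BB \<and> sum_list ys = y}"
  by (rule bdd_belowI[where m = 0]) (auto intro: sum_G_nonneg)

lemma P_le_sum: "set ys \<subseteq> BB \<Longrightarrow> pV (sum_list ys) \<le> sum_list (map gV ys)"
  unfolding pV_def by (rule cInf_lower[OF _ P_bdd]) blast

lemma P_ge:
  assumes "y \<in> BB" "\<And>ys. set ys \<subseteq> BB \<Longrightarrow> sum_list ys = y \<Longrightarrow> c \<le> sum_list (map gV ys)"
  shows "c \<le> pV y"
  unfolding pV_def
proof (rule cInf_greatest)
  show "{sum_list (map gV ys) | ys. set ys \<subseteq> BB \<and> sum_list ys = y} \<noteq> {}"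
    using assms(1) by (auto intro!: exI[where x = "[y]"])
qed (use assms(2) in blast)

lemma P_nonneg: "y \<in> BB \<Longrightarrow> 0 \<le> pV y"
  by (rule P_ge) (auto intro: sum_G_nonneg)

lemma P_le_G: "y \<in> BB \<Longrightarrow> pV y \<le> gV y"
  using P_le_sum[of "[y]"] by simp

lemma P_zero: "pV 0 = 0"
proof -
  have "pV 0 \<le> gV 0" using P_le_G B_zero by blast
  moreover have "gV 0 \<le> 0" by (simp add: gV_def V_zero)
  ultimately show ?thesis using P_nonneg[OF B_zero] by linarith
qed

lemma P_add:
  assumes "y \<in> BB" "z \<in> BB"
  shows "pV (y + z) \<le> pV y + pV z"
proof -
  have A: "pV (y + z) - sum_list (map gV zs) \<le> pV y" if zs: "set zs \<subseteq> BB" "sum_list zs = z" for zs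
  proof (rule P_ge[OF assms(1)])
    fix ys assume ys: "set ys \<subseteq> BB" "sum_list ys = y"
    have "pV (sum_list (ys @ zs)) \<le> sum_list (map gV (ys @ zs))"
      using ys zs by (intro P_le_sum) auto
    then show "pV (y + z) - sum_list (map gV zs) \<le> sum_list (map gV ys)"
      using ys zs by simp
  qed
  have "pV (y + z) - pV y \<le> sum_list (map gV zs)" if "set zs \<subseteq> BB" "sum_list zs = z" for zs
  proof -
    have "pV (y + z) - sum_list (map gV zs) \<le> pV y" using A[OF that] .
    then show ?thesis by linarith
  qed
  then have "pV (y + z) - pV y \<le> pV z" by (intro P_ge[OF assms(2)])
  then show ?thesis by simp
qed

lemma sum_list_neg: "sum_list (map uminus ys) = - sum_list (ys :: 'a list)"
  by (induction ys) simp_all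

lemma sum_list_scale: "sum_list (map (scaleR t) ys) = t *\<^sub>R sum_list (ys :: 'a list)"
  by (induction ys) (simp_all add: scaleR_right_distrib)

lemma P_neg_le: "y \<in> BB \<Longrightarrow> pV (- y) \<le> pV y"
proof (rule P_ge)
  fix ys assume ys: "set ys \<subseteq> BB" "sum_list ys = y"
  have h: "pV (sum_list (map uminus ys)) \<le> sum_list (map gV (map uminus ys))"
    using ys by (intro P_le_sum) (auto intro: B_neg)
  have e: "map gV (map uminus ys) = map gV ys" by (induction ys) (simp_all add: G_neg)
  show "pV (- y) \<le> sum_list (map gV ys)" using h[unfolded e sum_list_neg ys(2)] .
qed

lemma P_neg: "y \<in> BB \<Longrightarrow> pV (- y) = pV y"
  using P_neg_le[of y] P_neg_le[of "- y"] B_neg[of y] by simp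

lemma P_bal:
  assumes "y \<in> BB" "\<bar>t\<bar> \<le> 1"
  shows "pV (t *\<^sub>R y) \<le> pV y"
proof (rule P_ge[OF assms(1)])
  fix ys assume ys: "set ys \<subseteq> BB" "sum_list ys = y"
  have "pV (sum_list (map (scaleR t) ys)) \<le> sum_list (map gV (map (scaleR t) ys))"
    using ys by (intro P_le_sum) (auto intro: B_scale)
  also have "\<dots> \<le> sum_list (map gV ys)"
    unfolding map_map comp_def using ys(1)
    by (intro sum_list_mono G_bal assms(2)) auto
  finally show "pV (t *\<^sub>R y) \<le> sum_list (map gV ys)" using ys by (simp add: sum_list_scale)
qed

lemma P_nat: "y \<in> BB \<Longrightarrow> pV (real n *\<^sub>R y) \<le> real n * pV y"
proof (induction n)
  case 0 then show ?case by (simp add: P_zero)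
next
  case (Suc n)
  have e: "real (Suc n) *\<^sub>R y = real n *\<^sub>R y + y" by (simp add: scaleR_left_distrib)
  have "pV (real n *\<^sub>R y + y) \<le> pV (real n *\<^sub>R y) + pV y"
    by (rule P_add[OF B_scale[OF Suc.prems] Suc.prems])
  also have "\<dots> \<le> real n * pV y + pV y" using Suc.IH[OF Suc.prems] by (rule add_right_mono)
  also have "\<dots> = real (Suc n) * pV y" by (simp add: distrib_right)
  finally show ?case unfolding e .
qed

lemma P_scale:
  assumes "y \<in> BB" "\<bar>c\<bar> \<le> real N" "1 \<le> N"
  shows "pV (c *\<^sub>R y) \<le> real N * pV y"
proof -
  have N: "0 < real N" using assms(3) by simp
  have eq: "real N *\<^sub>R ((c / real N) *\<^sub>R y) = c *\<^sub>R y" using N by simp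
  have "pV (real N *\<^sub>R ((c / real N) *\<^sub>R y)) \<le> real N * pV ((c / real N) *\<^sub>R y)"
    by (rule P_nat[OF B_scale[OF assms(1)]])
  then have "pV (c *\<^sub>R y) \<le> real N * pV ((c / real N) *\<^sub>R y)" by (simp only: eq)
  also have "\<dots> \<le> real N * pV y"
  proof (rule mult_left_mono)
    have "\<bar>c / real N\<bar> = \<bar>c\<bar> / real N" using N by simp
    also have "\<dots> \<le> 1" using assms(2) N by simp
    finally show "pV ((c / real N) *\<^sub>R y) \<le> pV y" by (rule P_bal[OF assms(1)])
  qed simp
  finally show ?thesis .
qed

lemma chain: "set ys \<subseteq> BB \<Longrightarrow> gV (sum_list ys) \<le> 2 * sum_list (map gV ys)"
proof (induction "length ys" arbitrary: ys rule: less_induct)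
  case less
  define a where "a = sum_list (map gV ys)"
  have a0: "0 \<le> a" by (simp add: a_def sum_G_nonneg)
  have sB: "sum_list ys \<in> BB" using less.prems by (rule B_sum_list)
  show ?case
  proof (cases "1/2 \<le> a")
    case True
    then show ?thesis using G_le1[OF sB] unfolding a_def by linarith
  next
    case False
    then have ahalf: "a < 1/2" by simp
    show ?thesis
    proof (cases "ys = []")
      case True then show ?thesis by (simp add: gV_def V_zero)
    next
      case False
      define n where "n = length ys"
      have n0: "0 < n" using False n_def by simp
      define S where "S j = sum_list (map gV (take j ys))" for j
      define j where "j = (GREATEST j. j < n \<and> S j \<le> a/2)"
      have S0: "S 0 = 0" by (simp add: S_def)
      have jprop: "j < n \<and> S j \<le> a/2"
        unfolding j_def by (rule GreatestI_nat[where k=0 and b=n]) (use n0 S0 a0 in auto)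
      have jmax: "j' \<le> j" if "j' < n" "S j' \<le> a/2" for j'
        unfolding j_def by (rule Greatest_le_nat[where b=n]) (use that in auto)
      define L where "L = take j ys"
      define M where "M = ys ! j"
      define R where "R = drop (Suc j) ys"
      have ysd: "ys = L @ M # R" unfolding L_def M_def R_def using jprop n_def
        by (simp add: id_take_nth_drop)
      have LB: "set L \<subseteq> BB" "M \<in> BB" "set R \<subseteq> BB" using less.prems ysd by auto
      have SjL: "S j = sum_list (map gV L)" by (simp add: S_def L_def)
      have asplit: "a = S j + gV M + sum_list (map gV R)"
        unfolding a_def SjL by (subst ysd) simp
      have Rsmall: "sum_list (map gV R) \<le> a/2"
      proof (cases "Suc j < n")
        case True
        then have "\<not> S (Suc j) \<le> a/2" using jmax[of "Suc j"] by auto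
        moreover have "S (Suc j) = S j + gV M" unfolding S_def M_def using jprop n_def
          by (simp add: take_Suc_conv_app_nth)
        ultimately show ?thesis using asplit by linarith
      next
        case False
        then have "R = []" unfolding R_def n_def using jprop by simp
        then show ?thesis using a0 by simp
      qed
      have lenL: "length L < length ys" using jprop n_def by (simp add: L_def)
      have lenR: "length R < length ys" using n0 n_def by (simp add: R_def)
      have gL: "gV (sum_list L) \<le> a" using less.hyps[OF lenL LB(1)] SjL jprop by linarith
      have gR: "gV (sum_list R) \<le> a" using less.hyps[OF lenR LB(3)] Rsmall by linarith
      have gM: "gV M \<le> a" using asplit SjL sum_G_nonneg[of L] sum_G_nonneg[of R] by linarith
      have sumsplit: "sum_list ys = sum_list L + M + sum_list R" by (subst ysd) (simp add: add.assoc)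
      have sLB: "sum_list L \<in> BB" "sum_list R \<in> BB" using LB by (auto intro: B_sum_list)
      show ?thesis
      proof (cases "a = 0")
        case True
        have "sum_list ys \<in> V k" for k
        proof -
          have "sum_list L \<in> V (Suc k)" using G_all[OF sLB(1)] gL True by simp
          moreover have "M \<in> V (Suc k)" using G_all[OF LB(2)] gM True by simp
          moreover have "sum_list R \<in> V (Suc k)" using G_all[OF sLB(2)] gR True by simp
          ultimately show ?thesis unfolding sumsplit by (rule V_triple)
        qed
        then have "gV (sum_list ys) = 0" by (simp add: gV_def)
        then show ?thesis using a0 unfolding a_def by simp
      next
        case False
        then have apos: "0 < a" using a0 by simp
        obtain m where m: "(1/2::real)^m < a" using real_arch_pow_inv[OF apos, of "1/2"] by auto
        define k where "k = (LEAST k. (1/2::real)^(Suc k) \<le> a)"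
        have "(1/2::real)^(Suc m) \<le> a"
        proof -
          have "(1/2::real)^(Suc m) \<le> (1/2)^m" by (rule power_decreasing) auto
          then show ?thesis using m by linarith
        qed
        then have k1: "(1/2::real)^(Suc k) \<le> a"
          unfolding k_def by (rule LeastI)
        have k2: "a < (1/2)^k"
        proof (cases k)
          case 0 then show ?thesis using ahalf by simp
        next
          case (Suc k')
          have "k' < k" using Suc by simp
          then have "\<not> (1/2::real)^(Suc k') \<le> a" unfolding k_def by (rule not_less_Least)
          then show ?thesis using Suc by simp
        qed
        have "gV (sum_list L) < (1/2)^k" using gL k2 by linarith
        then have "sum_list L \<in> V (Suc k)" by (rule G_mem[OF sLB(1)])
        moreover have "gV M < (1/2)^k" using gM k2 by linarith
        then have "M \<in> V (Suc k)" by (rule G_mem[OF LB(2)])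
        moreover have "gV (sum_list R) < (1/2)^k" using gR k2 by linarith
        then have "sum_list R \<in> V (Suc k)" by (rule G_mem[OF sLB(2)])
        ultimately have "sum_list ys \<in> V k" unfolding sumsplit by (rule V_triple)
        then have "gV (sum_list ys) \<le> (1/2)^k" by (rule G_le)
        also have "\<dots> = 2 * (1/2)^(Suc k)" by simp
        also have "\<dots> \<le> 2 * a" using k1 by simp
        finally show ?thesis unfolding a_def .
      qed
    qed
  qed
qed

lemma G_le_P: "y \<in> BB \<Longrightarrow> gV y \<le> 2 * pV y"
proof -
  assume y: "y \<in> BB"
  have "gV y / 2 \<le> pV y"
  proof (rule P_ge[OF y])
    fix ys assume "set ys \<subseteq> BB" "sum_list ys = y"
    then show "gV y / 2 \<le> sum_list (map gV ys)" using chain[of ys] by simp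
  qed
  then show ?thesis by simp
qed

definition dV :: "'a \<Rightarrow> 'a \<Rightarrow> real" where
  "dV x y = (if x \<in> BB \<and> y \<in> BB then pV (x - y) else 0)"

lemma metric: "Metric_space BB dV"
proof
  fix x y
  show "0 \<le> dV x y" by (simp add: dV_def P_nonneg B_diff)
  show "dV x y = dV y x"
  proof (cases "x \<in> BB \<and> y \<in> BB")
    case True
    then have "pV (x - y) = pV (- (y - x))" by simp
    also have "\<dots> = pV (y - x)" using True by (intro P_neg B_diff) auto
    finally show ?thesis using True by (simp add: dV_def)
  qed (auto simp: dV_def)
next
  fix x y assume xy: "x \<in> BB" "y \<in> BB"
  show "(dV x y = 0) = (x = y)"
  proof
    assume "dV x y = 0"
    then have "pV (x - y) = 0" using xy by (simp add: dV_def)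
    then have "gV (x - y) \<le> 0" using G_le_P[OF B_diff[OF xy]] by simp
    then have "x - y = 0" by (rule G_zero_iff[OF B_diff[OF xy]])
    then show "x = y" by simp
  qed (simp add: dV_def P_zero xy)
next
  fix x y z assume xyz: "x \<in> BB" "y \<in> BB" "z \<in> BB"
  have "x - z = (x - y) + (y - z)" by simp
  then have "pV (x - z) \<le> pV (x - y) + pV (y - z)"
    using P_add[OF B_diff[OF xyz(1,2)] B_diff[OF xyz(2,3)]] by simp
  then show "dV x z \<le> dV x y + dV y z" using xyz by (simp add: dV_def)
qed

end



lemma cont_local:
  assumes "\<And>x. x \<in> topspace X \<Longrightarrow> f x \<in> topspace Y"
    and "\<And>x V. x \<in> topspace X \<Longrightarrow> openin Y V \<Longrightarrow> f x \<in> V \<Longrightarrow>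
           \<exists>U. openin X U \<and> x \<in> U \<and> (\<forall>z\<in>U. f z \<in> V)"
  shows "continuous_map X Y f"
  unfolding continuous_map_def
proof (intro conjI allI impI)
  show "f \<in> topspace X \<rightarrow> topspace Y" using assms(1) by blast
  fix V assume V: "openin Y V"
  show "openin X {x \<in> topspace X. f x \<in> V}"
  proof (subst openin_subopen, intro ballI)
    fix x assume "x \<in> {x \<in> topspace X. f x \<in> V}"
    then obtain U where U: "openin X U" "x \<in> U" "\<forall>z\<in>U. f z \<in> V" using assms(2) V by blast
    then have "U \<subseteq> {x \<in> topspace X. f x \<in> V}" using openin_subset[OF U(1)] by blast
    then show "\<exists>T. openin X T \<and> x \<in> T \<and> T \<subseteq> {x \<in> topspace X. f x \<in> V}" using U by blast
  qed
qed

lemma lin_translate_open: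
  fixes \<tau> :: "'a::{ordered_real_vector,lattice} topology"
  assumes "linear_topology_on UNIV \<tau>" "openin \<tau> Oo"
  shows "openin \<tau> ((\<lambda>z. y + z) ` Oo)"
proof -
  have top: "topspace \<tau> = UNIV" using assms(1) by (simp add: linear_topology_on_def)
  have add: "continuous_map (prod_topology \<tau> \<tau>) \<tau> (\<lambda>(a, b). a + b)"
    using assms(1) by (simp add: linear_topology_on_def)
  have "continuous_map \<tau> (prod_topology \<tau> \<tau>) (\<lambda>z. (z, - y))"
    by (intro continuous_map_pairedI continuous_map_id[unfolded id_def]) (simp add: top)
  then have "continuous_map \<tau> \<tau> ((\<lambda>(a, b). a + b) \<circ> (\<lambda>z. (z, - y)))"
    using add by (rule continuous_map_compose)
  then have "openin \<tau> {z \<in> topspace \<tau>. ((\<lambda>(a, b). a + b) \<circ> (\<lambda>z. (z, - y))) z \<in> Oo}"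
    using assms(2) by (rule openin_continuous_map_preimage)
  moreover have "{z \<in> topspace \<tau>. ((\<lambda>(a, b). a + b) \<circ> (\<lambda>z. (z, - y))) z \<in> Oo} = (\<lambda>z. y + z) ` Oo"
  proof (intro set_eqI iffI)
    fix z assume "z \<in> {z \<in> topspace \<tau>. ((\<lambda>(a, b). a + b) \<circ> (\<lambda>z. (z, - y))) z \<in> Oo}"
    then have "z - y \<in> Oo" by simp
    then show "z \<in> (\<lambda>z. y + z) ` Oo" by (intro image_eqI[where x = "z - y"]) simp_all
  next
    fix z assume "z \<in> (\<lambda>z. y + z) ` Oo"
    then show "z \<in> {z \<in> topspace \<tau>. ((\<lambda>(a, b). a + b) \<circ> (\<lambda>z. (z, - y))) z \<in> Oo}"
      by (auto simp: top)
  qed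
  ultimately show ?thesis by simp
qed

lemma lin_scalar_small:
  fixes T :: "'a::{ordered_real_vector,lattice} topology"
  assumes "linear_topology_on S T" "y \<in> S" "openin T Oo" "0 \<in> Oo"
  shows "\<exists>\<delta>>0. \<forall>t. \<bar>t\<bar> < \<delta> \<longrightarrow> t *\<^sub>R y \<in> Oo"
proof -
  have top: "topspace T = S" using assms(1) by (simp add: linear_topology_on_def)
  have sc: "continuous_map (prod_topology euclideanreal T) T (\<lambda>(c, a). c *\<^sub>R a)"
    using assms(1) by (simp add: linear_topology_on_def)
  have "openin (prod_topology euclideanreal T)
          {p \<in> topspace (prod_topology euclideanreal T). (\<lambda>(c, a). c *\<^sub>R a) p \<in> Oo}"
    using sc assms(3) by (rule openin_continuous_map_preimage)
  moreover have "(0, y) \<in> {p \<in> topspace (prod_topology euclideanreal T). (\<lambda>(c, a). c *\<^sub>R a) p \<in> Oo}"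
    using assms(2,4) top by simp
  ultimately obtain U V where UV: "openin euclideanreal U" "openin T V" "0 \<in> U" "y \<in> V"
    "U \<times> V \<subseteq> {p \<in> topspace (prod_topology euclideanreal T). (\<lambda>(c, a). c *\<^sub>R a) p \<in> Oo}"
    unfolding openin_prod_topology_alt by blast
  then have "open U" by simp
  then obtain e where e: "e > 0" "ball 0 e \<subseteq> U" using UV(3) open_contains_ball by blast
  show ?thesis
  proof (intro exI[of _ e] conjI allI impI e(1))
    fix t :: real assume "\<bar>t\<bar> < e"
    then have "t \<in> U" using e(2) by (auto simp: dist_real_def)
    then have "(t, y) \<in> U \<times> V" using UV(4) by simp
    then show "t *\<^sub>R y \<in> Oo" using UV(5) by auto
  qed
qed

lemma lin_add_small:
  fixes T :: "'a::{ordered_real_vector,lattice} topology"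
  assumes "linear_topology_on S T" "openin T U" "0 \<in> U"
  shows "\<exists>G. openin T G \<and> 0 \<in> G \<and> (\<forall>a\<in>G. \<forall>b\<in>G. a + b \<in> U)"
proof -
  have top: "topspace T = S" using assms(1) by (simp add: linear_topology_on_def)
  have ad: "continuous_map (prod_topology T T) T (\<lambda>(a, b). a + b)"
    using assms(1) by (simp add: linear_topology_on_def)
  have "openin (prod_topology T T)
          {p \<in> topspace (prod_topology T T). (\<lambda>(a, b). a + b) p \<in> U}"
    using ad assms(2) by (rule openin_continuous_map_preimage)
  moreover have "0 \<in> S" using assms(2,3) top openin_subset by blast
  then have "(0, 0) \<in> {p \<in> topspace (prod_topology T T). (\<lambda>(a, b). a + b) p \<in> U}"
    using assms(3) top by simp
  ultimately obtain G1 G2 where G: "openin T G1" "openin T G2" "0 \<in> G1" "0 \<in> G2"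
    "G1 \<times> G2 \<subseteq> {p \<in> topspace (prod_topology T T). (\<lambda>(a, b). a + b) p \<in> U}"
    unfolding openin_prod_topology_alt by blast
  show ?thesis
  proof (intro exI[of _ "G1 \<inter> G2"] conjI ballI)
    show "openin T (G1 \<inter> G2)" using G by blast
    show "0 \<in> G1 \<inter> G2" using G by blast
    fix a b assume "a \<in> G1 \<inter> G2" "b \<in> G1 \<inter> G2"
    then have "(a, b) \<in> G1 \<times> G2" by blast
    then show "a + b \<in> U" using G(5) by auto
  qed
qed

lemma lin_triple_small:
  fixes T :: "'a::{ordered_real_vector,lattice} topology"
  assumes "linear_topology_on S T" "openin T U" "0 \<in> U"
  shows "\<exists>G. openin T G \<and> 0 \<in> G \<and> (\<forall>a\<in>G. \<forall>b\<in>G. \<forall>c\<in>G. a + b + c \<in> U)"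
proof -
  obtain G1 where G1: "openin T G1" "0 \<in> G1" "\<forall>a\<in>G1. \<forall>b\<in>G1. a + b \<in> U"
    using lin_add_small[OF assms] by blast
  obtain G2 where G2: "openin T G2" "0 \<in> G2" "\<forall>a\<in>G2. \<forall>b\<in>G2. a + b \<in> G1"
    using lin_add_small[OF assms(1) G1(1,2)] by blast
  show ?thesis
  proof (intro exI[of _ G2] conjI ballI G2(1,2))
    fix a b c assume abc: "a \<in> G2" "b \<in> G2" "c \<in> G2"
    have "c + 0 \<in> G1" using G2(3) abc(3) G2(2) by blast
    then have "c \<in> G1" by simp
    moreover have "a + b \<in> G1" using G2(3) abc by blast
    ultimately show "a + b + c \<in> U" using G1(3) by blast
  qed
qed



lemma easy_dir:
  fixes \<tau> :: "'a::{ordered_real_vector,lattice} topology"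
  assumes IB: "I \<subseteq> B" and idI: "is_ideal I"
    and rho: "locally_solid_on B \<rho>" "metrizable_space \<rho>" "\<forall>U. openin \<rho> U \<longrightarrow> openin (subtopology \<tau> B) U"
  shows "solidly_submetrisable I (subtopology \<tau> I)"
  unfolding solidly_submetrisable_def
proof (intro exI[of _ "subtopology \<rho> I"] conjI allI impI)
  have lin: "linear_topology_on B \<rho>" using rho(1) by (simp add: locally_solid_on_def)
  have top: "topspace \<rho> = B" using lin by (simp add: linear_topology_on_def)
  have topI: "topspace (subtopology \<rho> I) = I" using top IB by auto
  show "metrizable_space (subtopology \<rho> I)" using rho(2) by (rule metrizable_space_subtopology)
  show "locally_solid_on I (subtopology \<rho> I)"
    unfolding locally_solid_on_def
  proof (intro conjI allI impI)
    show "linear_topology_on I (subtopology \<rho> I)"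
      unfolding linear_topology_on_def
    proof (intro conjI)
      show "topspace (subtopology \<rho> I) = I" by (rule topI)
      show "Hausdorff_space (subtopology \<rho> I)"
        using lin by (intro Hausdorff_space_subtopology) (simp add: linear_topology_on_def)
      have "continuous_map (prod_topology \<rho> \<rho>) \<rho> (\<lambda>(a, b). a + b)"
        using lin by (simp add: linear_topology_on_def)
      then have "continuous_map (subtopology (prod_topology \<rho> \<rho>) (I \<times> I)) \<rho> (\<lambda>(a, b). a + b)"
        by (rule continuous_map_from_subtopology)
      then have "continuous_map (subtopology (prod_topology \<rho> \<rho>) (I \<times> I)) (subtopology \<rho> I) (\<lambda>(a, b). a + b)"
        by (rule continuous_map_into_subtopology) (auto intro: ideal_add[OF idI])
      then show "continuous_map (prod_topology (subtopology \<rho> I) (subtopology \<rho> I)) (subtopology \<rho> I) (\<lambda>(a, b). a + b)"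
        by (simp add: subtopology_Times)
      have "continuous_map (prod_topology euclideanreal \<rho>) \<rho> (\<lambda>(c, a). c *\<^sub>R a)"
        using lin by (simp add: linear_topology_on_def)
      then have "continuous_map (subtopology (prod_topology euclideanreal \<rho>) (UNIV \<times> I)) \<rho> (\<lambda>(c, a). c *\<^sub>R a)"
        by (rule continuous_map_from_subtopology)
      then have "continuous_map (subtopology (prod_topology euclideanreal \<rho>) (UNIV \<times> I)) (subtopology \<rho> I) (\<lambda>(c, a). c *\<^sub>R a)"
        by (rule continuous_map_into_subtopology) (auto intro: ideal_scaleR[OF idI])
      then show "continuous_map (prod_topology euclideanreal (subtopology \<rho> I)) (subtopology \<rho> I) (\<lambda>(c, a). c *\<^sub>R a)"
        by (simp add: subtopology_Times)
    qed
  next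
    fix U assume U: "openin (subtopology \<rho> I) U \<and> 0 \<in> U"
    then obtain G where G: "openin \<rho> G" "U = G \<inter> I" by (auto simp: openin_subtopology)
    then have "0 \<in> G" using U by blast
    then obtain V where V: "solid_in B V" "V \<subseteq> G" "\<exists>W. openin \<rho> W \<and> 0 \<in> W \<and> W \<subseteq> V"
      using rho(1) G(1) unfolding locally_solid_on_def by blast
    then obtain W where W: "openin \<rho> W" "0 \<in> W" "W \<subseteq> V" by blast
    have "0 \<in> I" using idI by (rule ideal_zero)
    show "\<exists>V. solid_in I V \<and> V \<subseteq> U \<and> (\<exists>W. openin (subtopology \<rho> I) W \<and> 0 \<in> W \<and> W \<subseteq> V)"
    proof -
      have a: "solid_in I (V \<inter> I)" using V(1) IB unfolding solid_in_def by blast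
      have b: "V \<inter> I \<subseteq> U" using V(2) G(2) by blast
      have c: "openin (subtopology \<rho> I) (W \<inter> I)" using W(1) by (auto simp: openin_subtopology)
      have d: "0 \<in> W \<inter> I" using W(2) \<open>0 \<in> I\<close> by blast
      have e: "W \<inter> I \<subseteq> V \<inter> I" using W(3) by blast
      show ?thesis using a b c d e by blast
    qed
  qed
next
  fix U assume "openin (subtopology \<rho> I) U"
  then obtain G where G: "openin \<rho> G" "U = G \<inter> I" by (auto simp: openin_subtopology)
  then have "openin (subtopology \<tau> B) G" using rho(3) by blast
  then obtain H where H: "openin \<tau> H" "G = H \<inter> B" by (auto simp: openin_subtopology)
  then have "U = H \<inter> I" using G(2) IB by blast
  then show "openin (subtopology \<tau> I) U" using H(1) by (auto simp: openin_subtopology)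
qed



lemma pow_small: "0 < r \<Longrightarrow> \<exists>k. (1/2::real)^k < r"
  using real_arch_pow_inv[of r "1/2"] by auto

lemma hard_dir:
  fixes \<tau> :: "'a::{ordered_real_vector,lattice} topology" and x :: 'a
  assumes tau: "locally_solid_on UNIV \<tau>"
    and rho: "locally_solid_on (ideal_gen x) \<rho>" "metrizable_space \<rho>"
      "\<forall>U. openin \<rho> U \<longrightarrow> openin (subtopology \<tau> (ideal_gen x)) U"
  shows "solidly_submetrisable (band_gen x) (subtopology \<tau> (band_gen x))"
proof -
  define I where "I = ideal_gen x"
  define B where "B = band_gen x"
  define u where "u = vabs x"
  have idI: "is_ideal I" unfolding I_def by (rule ideal_gen_ideal)
  have idB: "is_ideal B" unfolding B_def by (rule band_gen_ideal)
  have IB: "I \<subseteq> B" unfolding I_def B_def by (rule ideal_sub_band)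
  have xI: "x \<in> I" unfolding I_def by (rule ideal_gen_mem)
  have zI: "0 \<in> I" using idI by (rule ideal_zero)
  have linT: "linear_topology_on UNIV \<tau>" using tau by (simp add: locally_solid_on_def)
  have linR: "linear_topology_on I \<rho>" using rho(1) by (simp add: locally_solid_on_def I_def)
  have topR: "topspace \<rho> = I" using linR by (simp add: linear_topology_on_def)
  have lsR: "\<And>U. openin \<rho> U \<Longrightarrow> 0 \<in> U \<Longrightarrow>
      \<exists>V. solid_in I V \<and> V \<subseteq> U \<and> (\<exists>W. openin \<rho> W \<and> 0 \<in> W \<and> W \<subseteq> V)"
    using rho(1) unfolding locally_solid_on_def I_def by blast
  have rhoT: "\<And>U. openin \<rho> U \<Longrightarrow> openin (subtopology \<tau> I) U" using rho(3) I_def by blast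
  obtain M m where Mm: "Metric_space M m" "\<rho> = Metric_space.mtopology M m"
    using rho(2) unfolding metrizable_space_def by blast
  interpret mm: Metric_space M m by (rule Mm(1))
  have MI: "M = I" using topR Mm(2) by simp
  have step: "\<forall>kQ. \<exists>p. openin \<rho> (snd kQ) \<and> 0 \<in> snd kQ \<longrightarrow>
      solid_in I (fst p) \<and> openin \<rho> (snd p) \<and> 0 \<in> snd p \<and> snd p \<subseteq> fst p \<and>
      (\<forall>a\<in>fst p. \<forall>b\<in>fst p. \<forall>c\<in>fst p. a + b + c \<in> snd kQ) \<and>
      fst p \<subseteq> mm.mball 0 (1 / real (Suc (fst kQ)))"
  proof
    fix kQ :: "nat \<times> 'a set"
    obtain k Q where kQ: "kQ = (k, Q)" by force
    show "\<exists>p. openin \<rho> (snd kQ) \<and> 0 \<in> snd kQ \<longrightarrow>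
      solid_in I (fst p) \<and> openin \<rho> (snd p) \<and> 0 \<in> snd p \<and> snd p \<subseteq> fst p \<and>
      (\<forall>a\<in>fst p. \<forall>b\<in>fst p. \<forall>c\<in>fst p. a + b + c \<in> snd kQ) \<and>
      fst p \<subseteq> mm.mball 0 (1 / real (Suc (fst kQ)))"
    proof (cases "openin \<rho> Q \<and> 0 \<in> Q")
      case False
      show ?thesis
      proof (rule exI[where x = undefined], rule impI, rule FalseE)
        assume "openin \<rho> (snd kQ) \<and> 0 \<in> snd kQ"
        then show False using False unfolding kQ snd_conv by blast
      qed
    next
      case True
      obtain G where G: "openin \<rho> G" "0 \<in> G" "\<forall>a\<in>G. \<forall>b\<in>G. \<forall>c\<in>G. a + b + c \<in> Q"
        using lin_triple_small[OF linR, of Q] True by blast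
      let ?G' = "G \<inter> mm.mball 0 (1 / real (Suc k))"
      have oG': "openin \<rho> ?G'" using G(1) mm.openin_mball Mm(2) by auto
      have "0 \<in> M" using zI MI by simp
      then have "0 \<in> mm.mball 0 (1 / real (Suc k))" by simp
      then have zG': "0 \<in> ?G'" using G(2) by blast
      obtain V where V: "solid_in I V" "V \<subseteq> ?G'" "\<exists>W. openin \<rho> W \<and> 0 \<in> W \<and> W \<subseteq> V"
        using lsR[OF oG' zG'] by blast
      then obtain W where W: "openin \<rho> W" "0 \<in> W" "W \<subseteq> V" by blast
      show ?thesis
      proof (intro exI[of _ "(V, W)"] impI)
        have "\<forall>a\<in>V. \<forall>b\<in>V. \<forall>c\<in>V. a + b + c \<in> Q" using G(3) V(2) by blast
        then show "solid_in I (fst (V, W)) \<and> openin \<rho> (snd (V, W)) \<and> 0 \<in> snd (V, W) \<and>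
          snd (V, W) \<subseteq> fst (V, W) \<and>
          (\<forall>a\<in>fst (V, W). \<forall>b\<in>fst (V, W). \<forall>c\<in>fst (V, W). a + b + c \<in> snd kQ) \<and>
          fst (V, W) \<subseteq> mm.mball 0 (1 / real (Suc (fst kQ)))"
          using V W kQ by auto
      qed
    qed
  qed
  from choice[OF step] obtain F where F: "\<And>kQ. openin \<rho> (snd kQ) \<Longrightarrow> 0 \<in> snd kQ \<Longrightarrow>
      solid_in I (fst (F kQ)) \<and> openin \<rho> (snd (F kQ)) \<and> 0 \<in> snd (F kQ) \<and> snd (F kQ) \<subseteq> fst (F kQ) \<and>
      (\<forall>a\<in>fst (F kQ). \<forall>b\<in>fst (F kQ). \<forall>c\<in>fst (F kQ). a + b + c \<in> snd kQ) \<and>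
      fst (F kQ) \<subseteq> mm.mball 0 (1 / real (Suc (fst kQ)))"
    by blast
  define Qs where "Qs = rec_nat I (\<lambda>k Q. snd (F (k, Q)))"
  define Ws where "Ws k = (case k of 0 \<Rightarrow> I | Suc j \<Rightarrow> fst (F (j, Qs j)))" for k
  have Qs0: "Qs 0 = I" and QsS: "Qs (Suc k) = snd (F (k, Qs k))" for k by (simp_all add: Qs_def)
  have W0: "Ws 0 = I" and WsS: "Ws (Suc k) = fst (F (k, Qs k))" for k by (simp_all add: Ws_def)
  have inv: "openin \<rho> (Qs k) \<and> 0 \<in> Qs k \<and> Qs k \<subseteq> Ws k \<and> solid_in I (Ws k)" for k
  proof (induction k)
    case 0
    have "openin \<rho> I" using topR openin_topspace by metis
    then show ?case using zI by (simp add: Qs0 W0 solid_in_def)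
  next
    case (Suc k)
    then show ?case using F[of "(k, Qs k)"] by (simp add: QsS WsS)
  qed
  have Wtriple: "a + b + c \<in> Ws k" if "a \<in> Ws (Suc k)" "b \<in> Ws (Suc k)" "c \<in> Ws (Suc k)" for a b c k
    using F[of "(k, Qs k)"] inv[of k] that by (auto simp: WsS)
  have Wball: "Ws (Suc k) \<subseteq> mm.mball 0 (1 / real (Suc k))" for k
    using F[of "(k, Qs k)"] inv[of k] by (auto simp: WsS)
  have Wsub: "Ws k \<subseteq> I" for k using inv[of k] by (simp add: solid_in_def)
  have Wz: "0 \<in> Ws k" for k using inv[of k] by blast
  have solidW: "z \<in> Ws k" if "w \<in> Ws k" "z \<in> I" "vabs z \<le> vabs w" for k w z
    using inv[of k] that unfolding solid_in_def by blast
  have infI: "inf (vabs y) u \<in> I" for y unfolding u_def by (rule ideal_inf_mem[OF idI xI])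
  have u0: "0 \<le> u" unfolding u_def by (rule vabs_nonneg)
  have inf0: "0 \<le> inf (vabs y) u" for y using u0 by (simp add: vabs_nonneg)
  have vinf: "vabs (inf (vabs y) u) = inf (vabs y) u" for y using inf0 by (rule vabs_pos)
  define V where "V k = {y \<in> B. inf (vabs y) u \<in> Ws k}" for k
  have Vmono: "z \<in> V k" if "y \<in> V k" "z \<in> B" "inf (vabs z) u \<le> inf (vabs y) u" for y z k
  proof -
    have "inf (vabs y) u \<in> Ws k" using that(1) by (simp add: V_def)
    moreover have "vabs (inf (vabs z) u) \<le> vabs (inf (vabs y) u)" unfolding vinf using that(3) .
    ultimately have "inf (vabs z) u \<in> Ws k" by (rule solidW[OF _ infI])
    then show ?thesis using that(2) by (simp add: V_def)
  qed
  interpret cv: chainV B V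
  proof
    show "V 0 = B" using infI W0 by (auto simp: V_def)
  next
    fix k
    have "inf (vabs 0) u = (0::'a)" using u0 by (simp add: inf_absorb1)
    then show "0 \<in> V k" using Wz ideal_zero[OF idB] by (simp add: V_def)
  next
    fix y k assume "y \<in> V k"
    then show "- y \<in> V k" using ideal_minus[OF idB] by (simp add: V_def)
  next
    fix k
    show "V (Suc k) \<subseteq> V k"
    proof
      fix y assume y: "y \<in> V (Suc k)"
      then have "inf (vabs y) u \<in> Ws (Suc k)" by (simp add: V_def)
      then have "inf (vabs y) u + 0 + 0 \<in> Ws k" using Wz by (intro Wtriple) 
      then show "y \<in> V k" using y by (simp add: V_def)
    qed
  next
    fix a b c k assume abc: "a \<in> V (Suc k)" "b \<in> V (Suc k)" "c \<in> V (Suc k)"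
    let ?s = "inf (vabs a) u + inf (vabs b) u + inf (vabs c) u"
    have sW: "?s \<in> Ws k" using abc by (intro Wtriple) (simp_all add: V_def)
    have "vabs (a + b + c) \<le> vabs a + vabs b + vabs c"
      using vabs_triangle[of "a + b" c] vabs_triangle[of a b] by (simp add: add_right_mono order_trans)
    then have "inf (vabs (a + b + c)) u \<le> inf (vabs a + vabs b + vabs c) u" by (rule inf_mono) simp
    also have "\<dots> \<le> inf (vabs a + vabs b) u + inf (vabs c) u"
      by (rule inf_add_le) (simp_all add: vabs_nonneg u0 add_nonneg_nonneg)
    also have "\<dots> \<le> ?s"
      by (rule add_right_mono, rule inf_add_le) (simp_all add: vabs_nonneg u0)
    finally have le: "inf (vabs (a + b + c)) u \<le> ?s" .
    have "0 \<le> ?s" using inf0 by (simp add: add_nonneg_nonneg)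
    then have "vabs ?s = ?s" by (rule vabs_pos)
    then have "inf (vabs (a + b + c)) u \<in> Ws k" using le sW by (intro solidW[OF sW infI]) (simp add: vinf)
    moreover have "a + b + c \<in> B" using abc by (auto simp: V_def intro!: ideal_add[OF idB])
    ultimately show "a + b + c \<in> V k" by (simp add: V_def)
  next
    fix y k and t :: real assume y: "y \<in> V k" and t: "\<bar>t\<bar> \<le> 1"
    have "vabs (t *\<^sub>R y) = \<bar>t\<bar> *\<^sub>R vabs y" by (rule vabs_scaleR)
    also have "\<dots> \<le> 1 *\<^sub>R vabs y" using t by (intro scaleR_right_mono vabs_nonneg)
    finally have "inf (vabs (t *\<^sub>R y)) u \<le> inf (vabs y) u" by (intro inf_mono) simp_all
    moreover have "t *\<^sub>R y \<in> B" using y by (auto simp: V_def intro: ideal_scaleR[OF idB])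
    ultimately show "t *\<^sub>R y \<in> V k" using Vmono y by blast
  next
    fix y assume all: "\<And>k. y \<in> V k"
    let ?w = "inf (vabs y) u"
    have yB: "y \<in> B" using all[of 0] by (simp add: V_def)
    have wM: "?w \<in> M" using infI MI by simp
    have small: "m 0 ?w < 1 / real (Suc k)" for k
    proof -
      have "?w \<in> Ws (Suc k)" using all[of "Suc k"] by (simp add: V_def)
      then show ?thesis using Wball[of k] by auto
    qed
    have "m 0 ?w = 0"
    proof (rule ccontr)
      assume "m 0 ?w \<noteq> 0"
      then have "0 < m 0 ?w" using mm.nonneg[of 0 ?w] by (smt (verit))
      then obtain n where "inverse (real (Suc n)) < m 0 ?w" using reals_Archimedean by blast
      then show False using small[of n] by (simp add: field_simps)
    qed
    then have "?w = 0" using mm.zero[of 0 ?w] wM zI MI by simp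
    then show "y = 0" using band_disjoint_zero[of y x] yB unfolding B_def u_def by simp
  next
    fix a b assume "a \<in> B" "b \<in> B" then show "a + b \<in> B" by (rule ideal_add[OF idB])
  next
    fix a and t :: real assume "a \<in> B" then show "t *\<^sub>R a \<in> B" by (rule ideal_scaleR[OF idB])
  qed
  interpret mb: Metric_space B cv.dV by (rule cv.metric)
  have K1: "cv.dV y z \<le> (1/2)^k" if "y \<in> B" "z \<in> B" "z - y \<in> V k" for y z k
  proof -
    have "y - z = - (z - y)" by simp
    then have yz: "y - z \<in> V k" using cv.V_neg[OF that(3)] by simp
    have yzB: "y - z \<in> B" using that by (intro ideal_diff[OF idB])
    have "cv.dV y z = cv.pV (y - z)" using that by (simp add: cv.dV_def)
    also have "\<dots> \<le> cv.gV (y - z)" by (rule cv.P_le_G[OF yzB])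
    also have "\<dots> \<le> (1/2)^k" by (rule cv.G_le[OF yz])
    finally show ?thesis .
  qed
  have K2: "z \<in> V k" if "z \<in> B" "cv.dV 0 z < (1/2)^(Suc k)" for z k
  proof -
    have zB: "0 \<in> B" by (rule ideal_zero[OF idB])
    have "cv.dV 0 z = cv.pV (- z)" using that zB by (simp add: cv.dV_def)
    also have "\<dots> = cv.pV z" by (rule cv.P_neg[OF that(1)])
    finally have "cv.pV z < (1/2)^(Suc k)" using that(2) by simp
    then have "cv.gV z < (1/2)^k" using cv.G_le_P[OF that(1)] by simp
    then have "z \<in> V (Suc k)" by (rule cv.G_mem[OF that(1)])
    then show ?thesis using cv.V_dec by blast
  qed
  have K3: "\<exists>Oo. openin \<tau> Oo \<and> 0 \<in> Oo \<and> (\<forall>y\<in>B. y \<in> Oo \<longrightarrow> y \<in> V k)" for k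
  proof -
    have "openin (subtopology \<tau> I) (Qs k)" using inv[of k] rhoT by blast
    then obtain O1 where O1: "openin \<tau> O1" "Qs k = O1 \<inter> I" by (auto simp: openin_subtopology)
    have "0 \<in> O1" using inv[of k] O1(2) by blast
    then obtain S where S: "solid_in UNIV S" "S \<subseteq> O1" "\<exists>W. openin \<tau> W \<and> 0 \<in> W \<and> W \<subseteq> S"
      using tau O1(1) unfolding locally_solid_on_def by blast
    then obtain Oo where Oo: "openin \<tau> Oo" "0 \<in> Oo" "Oo \<subseteq> S" by blast
    show ?thesis
    proof (intro exI[of _ Oo] conjI Oo(1,2) ballI impI)
      fix y assume y: "y \<in> B" "y \<in> Oo"
      then have yS: "y \<in> S" using Oo(3) by blast
      have "vabs (inf (vabs y) u) \<le> vabs y" unfolding vinf by simp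
      then have "inf (vabs y) u \<in> S" using S(1) yS unfolding solid_in_def by blast
      then have "inf (vabs y) u \<in> Qs k" using S(2) O1(2) infI by blast
      then have "inf (vabs y) u \<in> Ws k" using inv[of k] by blast
      then show "y \<in> V k" using y(1) by (simp add: V_def)
    qed
  qed
  have topB: "topspace (mb.mtopology) = B" by (rule mb.topspace_mtopology)
  have openB: "\<exists>r>0. mb.mball a r \<subseteq> W" if "openin mb.mtopology W" "a \<in> W" for W a
    using that mb.openin_mtopology by blast
  have linB: "linear_topology_on B mb.mtopology"
    unfolding linear_topology_on_def
  proof (intro conjI)
    show "topspace mb.mtopology = B" by (rule topB)
    show "Hausdorff_space mb.mtopology" by (rule mb.Hausdorff_space_mtopology)
    show "continuous_map (prod_topology mb.mtopology mb.mtopology) mb.mtopology (\<lambda>(a, b). a + b)"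
    proof (rule cont_local)
      fix p assume "p \<in> topspace (prod_topology mb.mtopology mb.mtopology)"
      then show "(\<lambda>(a, b). a + b) p \<in> topspace mb.mtopology"
        using topB by (auto intro: ideal_add[OF idB])
    next
      fix p Vv assume p: "p \<in> topspace (prod_topology mb.mtopology mb.mtopology)"
        and Vv: "openin mb.mtopology Vv" "(\<lambda>(a, b). a + b) p \<in> Vv"
      obtain a b where ab: "p = (a, b)" by force
      have aB: "a \<in> B" and bB: "b \<in> B" using p ab topB by auto
      have "a + b \<in> Vv" using Vv(2) ab by simp
      then obtain r where r: "r > 0" "mb.mball (a + b) r \<subseteq> Vv" using openB[OF Vv(1)] by blast
      show "\<exists>U. openin (prod_topology mb.mtopology mb.mtopology) U \<and> p \<in> U \<and>
              (\<forall>z\<in>U. (\<lambda>(a, b). a + b) z \<in> Vv)"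
      proof (intro exI[of _ "mb.mball a (r/2) \<times> mb.mball b (r/2)"] conjI ballI)
        show "openin (prod_topology mb.mtopology mb.mtopology) (mb.mball a (r/2) \<times> mb.mball b (r/2))"
          by (simp add: openin_prod_Times_iff mb.openin_mball)
        show "p \<in> mb.mball a (r/2) \<times> mb.mball b (r/2)" using ab aB bB r by simp
        fix z assume z: "z \<in> mb.mball a (r/2) \<times> mb.mball b (r/2)"
        obtain a' b' where ab': "z = (a', b')" by force
        have a': "a' \<in> B" "cv.dV a a' < r/2" and b': "b' \<in> B" "cv.dV b b' < r/2" using z ab' by auto
        have e: "(a + b) - (a' + b') = (a - a') + (b - b')" by simp
        have "cv.pV ((a + b) - (a' + b')) \<le> cv.pV (a - a') + cv.pV (b - b')"
          unfolding e by (rule cv.P_add; rule ideal_diff[OF idB]) (simp_all add: aB bB a'(1) b'(1))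
        also have "\<dots> = cv.dV a a' + cv.dV b b'" using aB bB a'(1) b'(1) by (simp add: cv.dV_def)
        finally have "cv.dV (a + b) (a' + b') < r"
          using a'(2) b'(2) aB bB a'(1) b'(1) ideal_add[OF idB] by (simp add: cv.dV_def)
        then have "a' + b' \<in> mb.mball (a + b) r"
          using aB bB a'(1) b'(1) ideal_add[OF idB] by simp
        then show "(\<lambda>(a, b). a + b) z \<in> Vv" using r(2) ab' by auto
      qed
    qed
    show "continuous_map (prod_topology euclideanreal mb.mtopology) mb.mtopology (\<lambda>(c, a). c *\<^sub>R a)"
    proof (rule cont_local)
      fix p assume "p \<in> topspace (prod_topology euclideanreal mb.mtopology)"
      then show "(\<lambda>(c, a). c *\<^sub>R a) p \<in> topspace mb.mtopology"
        using topB by (auto intro: ideal_scaleR[OF idB])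
    next
      fix p Vv assume p: "p \<in> topspace (prod_topology euclideanreal mb.mtopology)"
        and Vv: "openin mb.mtopology Vv" "(\<lambda>(c, a). c *\<^sub>R a) p \<in> Vv"
      obtain c y where cy: "p = (c, y)" by force
      have yB: "y \<in> B" using p cy topB by auto
      have "c *\<^sub>R y \<in> Vv" using Vv(2) cy by simp
      then obtain r where r: "r > 0" "mb.mball (c *\<^sub>R y) r \<subseteq> Vv" using openB[OF Vv(1)] by blast
      obtain k where k: "(1/2::real)^k < r/2" using pow_small[of "r/2"] r(1) by auto
      obtain Oo where Oo: "openin \<tau> Oo" "0 \<in> Oo" "\<forall>y\<in>B. y \<in> Oo \<longrightarrow> y \<in> V k" using K3 by blast
      obtain \<delta>1 where d1: "\<delta>1 > 0" "\<forall>t. \<bar>t\<bar> < \<delta>1 \<longrightarrow> t *\<^sub>R y \<in> Oo"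
        using lin_scalar_small[OF linT _ Oo(1,2), of y] by blast
      define N where "N = nat \<lceil>\<bar>c\<bar>\<rceil> + 1"
      have N1: "1 \<le> N" by (simp add: N_def)
      have cN: "\<bar>c\<bar> + 1 \<le> real N" unfolding N_def by linarith
      have Npos: "0 < real N" using N1 by simp
      define \<delta> where "\<delta> = min \<delta>1 1"
      have dpos: "\<delta> > 0" using d1(1) by (simp add: \<delta>_def)
      show "\<exists>U. openin (prod_topology euclideanreal mb.mtopology) U \<and> p \<in> U \<and>
              (\<forall>z\<in>U. (\<lambda>(c, a). c *\<^sub>R a) z \<in> Vv)"
      proof (intro exI[of _ "ball c \<delta> \<times> mb.mball y (r / (2 * real N))"] conjI ballI)
        show "openin (prod_topology euclideanreal mb.mtopology) (ball c \<delta> \<times> mb.mball y (r / (2 * real N)))"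
          by (simp add: openin_prod_Times_iff mb.openin_mball)
        show "p \<in> ball c \<delta> \<times> mb.mball y (r / (2 * real N))" using cy yB r(1) dpos Npos by simp
        fix z assume z: "z \<in> ball c \<delta> \<times> mb.mball y (r / (2 * real N))"
        obtain c' y' where cy': "z = (c', y')" by force
        have c': "\<bar>c - c'\<bar> < \<delta>" using z cy' by (simp add: dist_real_def)
        have y': "y' \<in> B" "cv.dV y y' < r / (2 * real N)" using z cy' by auto
        have diffB: "y - y' \<in> B" using yB y'(1) by (rule ideal_diff[OF idB])
        have e: "c *\<^sub>R y - c' *\<^sub>R y' = (c - c') *\<^sub>R y + c' *\<^sub>R (y - y')"
          by (simp add: algebra_simps)
        have t1: "cv.pV ((c - c') *\<^sub>R y) < r/2"
        proof -
          have "\<bar>c - c'\<bar> < \<delta>1" using c' by (simp add: \<delta>_def)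
          then have "(c - c') *\<^sub>R y \<in> Oo" using d1(2) by blast
          moreover have "(c - c') *\<^sub>R y \<in> B" using yB by (rule ideal_scaleR[OF idB])
          ultimately have "(c - c') *\<^sub>R y \<in> V k" using Oo(3) by blast
          then have "cv.gV ((c - c') *\<^sub>R y) \<le> (1/2)^k" by (rule cv.G_le)
          moreover have "cv.pV ((c - c') *\<^sub>R y) \<le> cv.gV ((c - c') *\<^sub>R y)"
            by (rule cv.P_le_G) (rule ideal_scaleR[OF idB yB])
          ultimately show ?thesis using k by linarith
        qed
        have t2: "cv.pV (c' *\<^sub>R (y - y')) < r/2"
        proof -
          have "\<bar>c'\<bar> \<le> \<bar>c\<bar> + 1" using c' by (simp add: \<delta>_def) linarith
          then have "\<bar>c'\<bar> \<le> real N" using cN by linarith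
          then have "cv.pV (c' *\<^sub>R (y - y')) \<le> real N * cv.pV (y - y')"
            by (rule cv.P_scale[OF diffB _ N1])
          also have "cv.pV (y - y') = cv.dV y y'" using yB y'(1) by (simp add: cv.dV_def)
          also have "real N * cv.dV y y' < real N * (r / (2 * real N))"
            using y'(2) Npos by (intro mult_strict_left_mono) simp_all
          also have "\<dots> = r/2" using Npos by simp
          finally show ?thesis .
        qed
        have "cv.pV (c *\<^sub>R y - c' *\<^sub>R y') \<le> cv.pV ((c - c') *\<^sub>R y) + cv.pV (c' *\<^sub>R (y - y'))"
          unfolding e by (rule cv.P_add) (simp_all add: ideal_scaleR[OF idB] yB diffB)
        then have "cv.pV (c *\<^sub>R y - c' *\<^sub>R y') < r" using t1 t2 by linarith
        moreover have "c *\<^sub>R y \<in> B" "c' *\<^sub>R y' \<in> B" using yB y'(1) by (simp_all add: ideal_scaleR[OF idB])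
        ultimately have "c' *\<^sub>R y' \<in> mb.mball (c *\<^sub>R y) r" by (simp add: cv.dV_def)
        then show "(\<lambda>(c, a). c *\<^sub>R a) z \<in> Vv" using r(2) cy' by auto
      qed
    qed
  qed
  show ?thesis
    unfolding solidly_submetrisable_def B_def[symmetric]
  proof (intro exI[of _ mb.mtopology] conjI allI impI)
    show "metrizable_space mb.mtopology" by (rule mb.metrizable_space_mtopology)
    show "locally_solid_on B mb.mtopology"
      unfolding locally_solid_on_def
    proof (intro conjI linB allI impI)
      fix U assume U: "openin mb.mtopology U \<and> 0 \<in> U"
      then obtain r where r: "r > 0" "mb.mball 0 r \<subseteq> U" using openB by blast
      obtain k where k: "(1/2::real)^k < r" using pow_small r(1) by blast
      have zB: "0 \<in> B" by (rule ideal_zero[OF idB])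
      have VB: "V k \<subseteq> B" by (auto simp: V_def)
      show "\<exists>V'. solid_in B V' \<and> V' \<subseteq> U \<and> (\<exists>W. openin mb.mtopology W \<and> 0 \<in> W \<and> W \<subseteq> V')"
      proof -
        have f1: "solid_in B (V k)"
          unfolding solid_in_def
        proof (intro conjI VB ballI impI)
          fix z y assume zy: "z \<in> V k" "y \<in> B" "vabs y \<le> vabs z"
          have "inf (vabs y) u \<le> inf (vabs z) u" using zy(3) by (intro inf_mono) simp_all
          then show "y \<in> V k" using Vmono zy(1,2) by blast
        qed
        have f2: "V k \<subseteq> U"
        proof
          fix z assume z: "z \<in> V k"
          then have zB': "z \<in> B" using VB by blast
          have "cv.dV 0 z \<le> (1/2)^k" using K1[OF zB zB'] z by simp
          then have "z \<in> mb.mball 0 r" using zB zB' k by simp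
          then show "z \<in> U" using r(2) by blast
        qed
        have f3: "openin mb.mtopology (mb.mball 0 ((1/2)^(Suc k)))" by (rule mb.openin_mball)
        have f4: "0 \<in> mb.mball 0 ((1/2::real)^(Suc k))" using zB by simp
        have f5: "mb.mball 0 ((1/2)^(Suc k)) \<subseteq> V k"
        proof
          fix z assume "z \<in> mb.mball 0 ((1/2)^(Suc k))"
          then have "z \<in> B" "cv.dV 0 z < (1/2)^(Suc k)" by auto
          then show "z \<in> V k" by (rule K2)
        qed
        show ?thesis using f1 f2 f3 f4 f5 by blast
      qed
    qed
  next
    fix U assume U: "openin mb.mtopology U"
    show "openin (subtopology \<tau> B) U"
    proof (subst openin_subopen, intro ballI)
      fix y assume y: "y \<in> U"
      then obtain r where r: "r > 0" "mb.mball y r \<subseteq> U" using openB U by blast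
      have yB: "y \<in> B" using y U topB openin_subset by blast
      obtain k where k: "(1/2::real)^k < r" using pow_small r(1) by blast
      obtain Oo where Oo: "openin \<tau> Oo" "0 \<in> Oo" "\<forall>y\<in>B. y \<in> Oo \<longrightarrow> y \<in> V k" using K3 by blast
      let ?T = "((\<lambda>z. y + z) ` Oo) \<inter> B"
      show "\<exists>T. openin (subtopology \<tau> B) T \<and> y \<in> T \<and> T \<subseteq> U"
      proof (intro exI[of _ ?T] conjI)
        show "openin (subtopology \<tau> B) ?T"
          using lin_translate_open[OF linT Oo(1), of y] by (auto simp: openin_subtopology)
        have "y + 0 \<in> (\<lambda>z. y + z) ` Oo" using Oo(2) by blast
        then show "y \<in> ?T" using yB by simp
        show "?T \<subseteq> U"
        proof
          fix z assume z: "z \<in> ?T"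
          then obtain ww where ww: "ww \<in> Oo" "z = y + ww" by blast
          have zB: "z \<in> B" using z by blast
          have "ww = z - y" using ww(2) by simp
          then have "ww \<in> B" using zB yB ideal_diff[OF idB] by simp
          then have "ww \<in> V k" using Oo(3) ww(1) by blast
          then have "z - y \<in> V k" using ww(2) by simp
          then have "cv.dV y z \<le> (1/2)^k" by (rule K1[OF yB zB])
          then have "z \<in> mb.mball y r" using yB zB k by simp
          then show "z \<in> U" using r(2) by blast
        qed
      qed
    qed
  qed
qed


theorem proposition3p6:
  fixes \<tau> :: "'a::{ordered_real_vector,lattice} topology" and x :: 'a
  assumes "archimedean_vl TYPE('a)"
    and "locally_solid_on UNIV \<tau>"
  shows "solidly_submetrisable (band_gen x) (subtopology \<tau> (band_gen x))
     \<longleftrightarrow> solidly_submetrisable (ideal_gen x) (subtopology \<tau> (ideal_gen x))"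
proof
  assume "solidly_submetrisable (band_gen x) (subtopology \<tau> (band_gen x))"
  then obtain \<rho> where r: "locally_solid_on (band_gen x) \<rho>" "metrizable_space \<rho>"
    "\<forall>U. openin \<rho> U \<longrightarrow> openin (subtopology \<tau> (band_gen x)) U"
    unfolding solidly_submetrisable_def by blast
  show "solidly_submetrisable (ideal_gen x) (subtopology \<tau> (ideal_gen x))"
    by (rule easy_dir[OF ideal_sub_band ideal_gen_ideal r])
next
  assume "solidly_submetrisable (ideal_gen x) (subtopology \<tau> (ideal_gen x))"
  then obtain \<rho> where r: "locally_solid_on (ideal_gen x) \<rho>" "metrizable_space \<rho>"
    "\<forall>U. openin \<rho> U \<longrightarrow> openin (subtopology \<tau> (ideal_gen x)) U"
    unfolding solidly_submetrisable_def by blast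
  show "solidly_submetrisable (band_gen x) (subtopology \<tau> (band_gen x))"
    by (rule hard_dir[OF assms(2) r])
qed

end
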